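(* Let $g\in\mathbb{I}_{\geq1}$, $c\in\mathbb{I}_{\geq g}$, $b\in\mathbb{I}_{\geq c}$ be integers with $q:=\lceil c/g\rceil\geq 2$. Let $\mathbb{X}_p\subseteq\mathbb{R}^{n_p}$, $\mathbb{U}_p\subseteq\mathbb{R}^{m_p}$ be closed sets containing the origin, $f_p:\mathbb{R}^{n_p}\times\mathbb{R}^{m_p}\to\mathbb{R}^{n_p}$ with $f_p(0,0)=0$, $\mathbb{X}_{f,p}\subseteq\mathbb{X}_p$ closed containing the origin, and $k_p:\mathbb{X}_{f,p}\to\mathbb{U}_p$. Consider the system $x^+=f(x,u)$ with state $x=(x_p,u_s,\beta)$, input $u=(u_c,\gamma,\delta)$ with $\gamma,\delta\in\{0,1\}$, $\gamma+\delta\leq1$, and $$f(x,u)=\big(f_p(x_p,(\gamma+\delta)u_c+(1-\gamma-\delta)u_s),\ (\gamma+\delta)u_c+(1-\gamma-\delta)u_s,\ \min\{\beta+(1-\delta)g-\gamma c,\,b\}\big).$$ Let $\mathbb{X}_f:=\mathbb{X}_{f,p}\times\mathbb{U}_p\times\mathbb{I}_{[0,b]}$, the terminal control sequence $\kappa_0(x):=(k_p(x_p),0,1)$ and $\kappa_j(x):=(0,0,0)$ for $j\in\mathbb{I}_{[1,q-1]}$, $f_0(x):=x$, $f_i(x):=f(f_{i-1}(x),\kappa_{(i-1)\bmod q}(f_{i-1}(x)))$, and let $f_{\beta,i}(x)$ be the last component of $f_i(x)$. For $\sigma>0$ let $V_{f,\beta}(\beta):=\sigma(b^2-\beta^2)$.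 Then there exists $\alpha:\mathbb{I}_{[0,b]}\to\mathbb{R}$ with $\alpha(b)=0$ and $\alpha(\beta)>0$ for all $\beta\in\mathbb{I}_{[0,b-1]}$ such that for all $x\in\mathbb{X}_f$, $$V_{f,\beta}(f_{\beta,q}(x))-V_{f,\beta}(\beta)\leq-\alpha(\beta).$$
   Context: $\mathbb{I}$ denotes the integers, $\mathbb{I}_{[a,b]}:=\mathbb{I}\cap[a,b]$, $\mathbb{I}_{\geq a}:=\mathbb{I}\cap[a,\infty)$. The component $\beta$ is the token level of a token bucket (size $b$, token rate $g$, transmission cost $c$); $\gamma=1$ denotes a transmission subject to the token bucket and $\delta=1$ a transmission over a direct link that consumes no tokens and during which no tokens are added. *)

theory Defs
  imports "HOL-Analysis.Analysis"
begin

definition tb_f :: "('a \<Rightarrow> 'b \<Rightarrow> 'a) \<Rightarrow> int \<Rightarrow> int \<Rightarrow> int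
    \<Rightarrow> ('a \<times> 'b::real_vector \<times> int) \<Rightarrow> ('b \<times> int \<times> int) \<Rightarrow> ('a \<times> 'b \<times> int)" where
  "tb_f fp g c b x u =
     (case x of (xp, us, \<beta>) \<Rightarrow> case u of (uc, \<gamma>, \<delta>) \<Rightarrow>
        let v = of_int (\<gamma> + \<delta>) *\<^sub>R uc + of_int (1 - \<gamma> - \<delta>) *\<^sub>R us
        in (fp xp v, v, min (\<beta> + (1 - \<delta>) * g - \<gamma> * c) b))"

definition tb_kappa :: "('a \<Rightarrow> 'b::real_vector) \<Rightarrow> nat \<Rightarrow> ('a \<times> 'b \<times> int) \<Rightarrow> ('b \<times> int \<times> int)" where
  "tb_kappa kp j x = (if j = 0 then (kp (fst x), 0, 1) else (0, 0, 0))"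

fun tb_fi :: "('a \<Rightarrow> 'b \<Rightarrow> 'a) \<Rightarrow> ('a \<Rightarrow> 'b::real_vector) \<Rightarrow> int \<Rightarrow> int \<Rightarrow> int \<Rightarrow> nat \<Rightarrow> nat
    \<Rightarrow> ('a \<times> 'b \<times> int) \<Rightarrow> ('a \<times> 'b \<times> int)" where
  "tb_fi fp kp g c b q 0 x = x"
| "tb_fi fp kp g c b q (Suc i) x =
     (let y = tb_fi fp kp g c b q i x in tb_f fp g c b y (tb_kappa kp (i mod q) y))"

definition V_f_beta :: "real \<Rightarrow> int \<Rightarrow> int \<Rightarrow> real" where
  "V_f_beta \<sigma> b \<beta> = \<sigma> * (real_of_int b ^ 2 - real_of_int \<beta> ^ 2)"

end

theory Submission
  imports Defs
begin

lemma tb_f_beta: "snd (snd (tb_f fp g c b x (uc, \<gamma>, \<delta>))) = min (snd (snd x) + (1 - \<delta>) * g - \<gamma> * c) b"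
  by (cases x) (auto simp: tb_f_def Let_def)

lemma tb_fi_beta:
  assumes "snd (snd x) \<le> b" "g \<ge> 0"
  shows "n \<le> q \<Longrightarrow> snd (snd (tb_fi fp kp g c b q n x)) =
     (if n = 0 then snd (snd x) else min (snd (snd x) + (int n - 1) * g) b)"
proof (induction n)
  case 0
  then show ?case by simp
next
  case (Suc i)
  then have iq: "i mod q = i" by simp
  show ?case
  proof (cases "i = 0")
    case True
    then show ?thesis using assms iq by (simp add: tb_kappa_def tb_f_beta)
  next
    case False
    then show ?thesis using Suc iq assms
      by (auto simp: tb_kappa_def tb_f_beta Let_def algebra_simps min_def)
  qed
qed

theorem lemma3:
  fixes g c b :: int and \<sigma> :: real
    and Xp Xfp :: "'a::euclidean_space set" and Up :: "'b::euclidean_space set"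
    and fp :: "'a \<Rightarrow> 'b \<Rightarrow> 'a" and kp :: "'a \<Rightarrow> 'b"
  assumes "g \<ge> 1" and "c \<ge> g" and "b \<ge> c"
    and "nat \<lceil>real_of_int c / real_of_int g\<rceil> \<ge> 2"
    and "closed Xp" and "0 \<in> Xp" and "closed Up" and "0 \<in> Up"
    and "fp 0 0 = 0"
    and "Xfp \<subseteq> Xp" and "closed Xfp" and "0 \<in> Xfp"
    and "\<forall>x\<in>Xfp. kp x \<in> Up"
    and "\<sigma> > 0"
  shows "\<exists>\<alpha> :: int \<Rightarrow> real. \<alpha> b = 0 \<and> (\<forall>\<beta>\<in>{0..b-1}. \<alpha> \<beta> > 0) \<and>
           (\<forall>x \<in> Xfp \<times> Up \<times> {0..b}.
              V_f_beta \<sigma> b (snd (snd (tb_fi fp kp g c b (nat \<lceil>real_of_int c / real_of_int g\<rceil>)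
                                  (nat \<lceil>real_of_int c / real_of_int g\<rceil>) x)))
              - V_f_beta \<sigma> b (snd (snd x)) \<le> - \<alpha> (snd (snd x)))"
proof -
  define q where "q = nat \<lceil>real_of_int c / real_of_int g\<rceil>"
  have q2: "q \<ge> 2" using assms(4) q_def by simp
  define \<alpha> where "\<alpha> = (\<lambda>\<beta>::int. \<sigma> * (real_of_int (min (\<beta> + g) b) ^ 2 - real_of_int \<beta> ^ 2))"
  have A: "\<alpha> b = 0" using assms(1) by (simp add: \<alpha>_def min_def)
  have B: "\<alpha> \<beta> > 0" if "\<beta> \<in> {0..b-1}" for \<beta>
  proof -
    have "0 \<le> \<beta>" "\<beta> < min (\<beta> + g) b" using that assms(1) by auto
    then have "real_of_int \<beta> ^ 2 < real_of_int (min (\<beta> + g) b) ^ 2"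
      by (intro power_strict_mono) auto
    then show ?thesis using assms(14) by (simp add: \<alpha>_def)
  qed
  have C: "V_f_beta \<sigma> b (snd (snd (tb_fi fp kp g c b q q x))) - V_f_beta \<sigma> b (snd (snd x))
      \<le> - \<alpha> (snd (snd x))" if "x \<in> Xfp \<times> Up \<times> {0..b}" for x
  proof -
    define \<beta> where "\<beta> = snd (snd x)"
    have hb: "0 \<le> \<beta>" "\<beta> \<le> b" using that \<beta>_def by auto
    have e: "snd (snd (tb_fi fp kp g c b q q x)) = min (\<beta> + (int q - 1) * g) b"
      using tb_fi_beta[where x=x and b=b and g=g and n=q and q=q and fp=fp and kp=kp and c=c] hb q2 assms(1) \<beta>_def by simp
    have m: "min (\<beta> + g) b \<le> min (\<beta> + (int q - 1) * g) b"
    proof -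
      have "1 * g \<le> (int q - 1) * g" using q2 assms(1) by (intro mult_right_mono) auto
      then show ?thesis by simp
    qed
    have "real_of_int (min (\<beta> + g) b) ^ 2 \<le> real_of_int (min (\<beta> + (int q - 1) * g) b) ^ 2"
      using m hb assms(1) by (intro power_mono) auto
    then show ?thesis using assms(14) unfolding e \<beta>_def[symmetric]
      by (simp add: V_f_beta_def \<alpha>_def algebra_simps mult_left_mono)
  qed
  show ?thesis using A B C unfolding q_def by blast
qed

end
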